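(* Let $N\ge 1$ be an integer, let $\mathbf{h}_{s},\mathbf{h}_{b}\in\mathbb{C}^{N\times 1}$ be nonzero vectors, and set $\mathbf{H}_{s}=\mathbf{h}_{s}\mathbf{h}_{s}^H$ and $\mathbf{H}_{b}=\mathbf{h}_{b}\mathbf{h}_{b}^H$. Let $N^{no}>0$, $\Gamma_{s,0}>0$ and $\Gamma_{b,0}>0$ be real constants. Consider the semidefinite program $$\min_{\mathbf{W}_{s},\mathbf{W}_{b}} \ \operatorname{Tr}(\mathbf{W}_{s})+\operatorname{Tr}(\mathbf{W}_{b})$$ over $N\times N$ Hermitian matrices $\mathbf{W}_{s},\mathbf{W}_{b}$, subject to $$\operatorname{Tr}(\mathbf{H}_{s}\mathbf{W}_{s})\ge N^{no}\Gamma_{s,0},$$ $$\operatorname{Tr}(\mathbf{H}_{s}\mathbf{W}_{b})\ge \Gamma_{b,0}\operatorname{Tr}(\mathbf{H}_{s}\mathbf{W}_{s})+N^{no}\Gamma_{b,0},$$ $$\operatorname{Tr}(\mathbf{H}_{b}\mathbf{W}_{b})\ge \Gamma_{b,0}\operatorname{Tr}(\mathbf{H}_{b}\mathbf{W}_{s})+N^{no}\Gamma_{b,0},$$ $$\mathbf{W}_{s}\succeq 0,\qquad \mathbf{W}_{b}\succeq 0.$$ Then this problem has an optimal solution $(\mathbf{W}_{s}^{*},\mathbf{W}_{b}^{*})$ with $\operatorname{rank}(\mathbf{W}_{s}^{*})=\operatorname{rank}(\mathbf{W}_{b}^{*})=1$.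
   Context: This is the semidefinite relaxation (rank-one constraints dropped) of the per-cluster NOMA-period power minimization in a downlink multi-antenna system: the base station has $N$ antennas and serves, in a cluster, a semantic user with channel $\mathbf{h}_{s}$ and a bit-based user with channel $\mathbf{h}_{b}$ using beamformers $\mathbf{w}_s,\mathbf{w}_b$, with $\mathbf{W}_s=\mathbf{w}_s\mathbf{w}_s^H$, $\mathbf{W}_b=\mathbf{w}_b\mathbf{w}_b^H$. Here $N^{no}=B^{no}N_0$ is the noise power (bandwidth times noise power spectral density), $\Gamma_{s,0}$ is the SNR threshold required by the semantic user, and $\Gamma_{b,0}=2^{R_0/B^{no}}-1$ is the SINR threshold of the bit-based user. $\mathbf{A}\succeq 0$ means $\mathbf{A}$ is positive semidefinite. *)

theory Defs
  imports "HOL-Analysis.Analysis"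
begin

text \<open>Complex N x N matrices are rendered as complex^'n^'n with a finite index type 'n
  (so N = CARD('n) \<ge> 1). Trace and rank are the HOL-Analysis notions.\<close>

definition hermitian :: "complex^'n^'n \<Rightarrow> bool" where
  "hermitian W \<longleftrightarrow> (\<forall>i j. W $ i $ j = cnj (W $ j $ i))"

definition herm_form :: "complex^'n^'n \<Rightarrow> complex^'n \<Rightarrow> complex" where
  "herm_form W x = (\<Sum>i\<in>UNIV. \<Sum>j\<in>UNIV. cnj (x $ i) * W $ i $ j * x $ j)"

definition psd :: "complex^'n^'n \<Rightarrow> bool" where
  "psd W \<longleftrightarrow> hermitian W \<and> (\<forall>x. 0 \<le> Re (herm_form W x) \<and> Im (herm_form W x) = 0)"

definition outer :: "complex^'n \<Rightarrow> complex^'n^'n" where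
  "outer h = (\<chi> i j. h $ i * cnj (h $ j))"

definition feasible ::
  "complex^'n \<Rightarrow> complex^'n \<Rightarrow> real \<Rightarrow> real \<Rightarrow> real \<Rightarrow> complex^'n^'n \<Rightarrow> complex^'n^'n \<Rightarrow> bool" where
  "feasible hs hb Nno Gs0 Gb0 Ws Wb \<longleftrightarrow>
     hermitian Ws \<and> hermitian Wb \<and>
     Re (trace (outer hs ** Ws)) \<ge> Nno * Gs0 \<and>
     Re (trace (outer hs ** Wb)) \<ge> Gb0 * Re (trace (outer hs ** Ws)) + Nno * Gb0 \<and>
     Re (trace (outer hb ** Wb)) \<ge> Gb0 * Re (trace (outer hb ** Ws)) + Nno * Gb0 \<and>
     psd Ws \<and> psd Wb"

definition objective :: "complex^'n^'n \<Rightarrow> complex^'n^'n \<Rightarrow> real" where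
  "objective Ws Wb = Re (trace Ws + trace Wb)"

end

theory Submission
  imports Defs
begin


definition bil :: "complex^'n^'n \<Rightarrow> complex^'n \<Rightarrow> complex^'n \<Rightarrow> complex" where
  "bil W x y = (\<Sum>i\<in>UNIV. \<Sum>j\<in>UNIV. cnj (x $ i) * W $ i $ j * y $ j)"

definition ip :: "complex^'n \<Rightarrow> complex^'n \<Rightarrow> complex" where
  "ip x y = (\<Sum>i\<in>UNIV. cnj (x $ i) * y $ i)"

definition nsq :: "complex^'n \<Rightarrow> real" where
  "nsq x = (\<Sum>i\<in>UNIV. (cmod (x $ i))^2)"

definition op :: "complex^'n \<Rightarrow> complex^'n \<Rightarrow> complex^'n^'n" where
  "op u v = (\<chi> i j. u $ i * cnj (v $ j))"

lemma herm_bil: "herm_form W x = bil W x x"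
  by (simp add: herm_form_def bil_def)

lemma bil_add1: "bil W (x + y) z = bil W x z + bil W y z"
  by (simp add: bil_def algebra_simps sum.distrib)
lemma bil_add2: "bil W x (y + z) = bil W x y + bil W x z"
  by (simp add: bil_def algebra_simps sum.distrib)
lemma bil_diff1: "bil W (x - y) z = bil W x z - bil W y z"
  by (simp add: bil_def algebra_simps sum_subtractf)
lemma bil_diff2: "bil W x (y - z) = bil W x y - bil W x z"
  by (simp add: bil_def algebra_simps sum_subtractf)
lemma bil_smult1: "bil W (c *s x) z = cnj c * bil W x z"
  by (simp add: bil_def algebra_simps sum_distrib_left)
lemma bil_smult2: "bil W x (c *s z) = c * bil W x z"
  by (simp add: bil_def algebra_simps sum_distrib_left)

lemma ip_add1: "ip (x + y) z = ip x z + ip y z"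
  by (simp add: ip_def algebra_simps sum.distrib)
lemma ip_add2: "ip x (y + z) = ip x y + ip x z"
  by (simp add: ip_def algebra_simps sum.distrib)
lemma ip_diff1: "ip (x - y) z = ip x z - ip y z"
  by (simp add: ip_def algebra_simps sum_subtractf)
lemma ip_diff2: "ip x (y - z) = ip x y - ip x z"
  by (simp add: ip_def algebra_simps sum_subtractf)
lemma ip_smult1: "ip (c *s x) z = cnj c * ip x z"
  by (simp add: ip_def algebra_simps sum_distrib_left)
lemma ip_smult2: "ip x (c *s z) = c * ip x z"
  by (simp add: ip_def algebra_simps sum_distrib_left)
lemma ip_sym: "ip y x = cnj (ip x y)"
  by (simp add: ip_def mult.commute)
lemma cnjsq: "z * cnj z = (of_real (cmod z))^2"
  by (metis complex_norm_square of_real_power)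
lemma cnjsq': "cnj z * z = (of_real (cmod z))^2"
  by (metis cnjsq mult.commute)

lemma ip_self: "ip x x = of_real (nsq x)"
  by (simp add: ip_def nsq_def cnjsq')

lemma bil_sym:
  assumes h: "hermitian W"
  shows "bil W y x = cnj (bil W x y)"
proof -
  have hc: "cnj (W$i$j) = W$j$i" for i j using h unfolding hermitian_def by (metis complex_cnj_cnj)
  have "cnj (bil W x y) = (\<Sum>i\<in>UNIV. \<Sum>j\<in>UNIV. x$i * W$j$i * cnj (y$j))"
    by (simp add: bil_def cnj_sum hc mult_ac)
  also have "\<dots> = (\<Sum>j\<in>UNIV. \<Sum>i\<in>UNIV. x$i * W$j$i * cnj (y$j))" by (rule sum.swap)
  also have "\<dots> = bil W y x" by (simp add: bil_def mult_ac)
  finally show ?thesis by simp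
qed

lemma nsq_nonneg: "nsq x \<ge> 0"
  by (simp add: nsq_def sum_nonneg)

lemma nsq_zero: "nsq x = 0 \<Longrightarrow> x = 0"
  unfolding nsq_def
  by (subst (asm) sum_nonneg_eq_0_iff) (auto simp: vec_eq_iff)

lemma norm_nsq: "(norm x)^2 = nsq x"
  by (simp add: norm_vec_def L2_set_def nsq_def sum_nonneg)

lemma trace_op_mult: "trace (op h h ** W) = herm_form W h"
proof -
  have "trace (op h h ** W) = (\<Sum>k\<in>UNIV. \<Sum>j\<in>UNIV. h$k * cnj (h$j) * W$j$k)"
    by (simp add: trace_def matrix_matrix_mult_def op_def)
  also have "\<dots> = (\<Sum>j\<in>UNIV. \<Sum>k\<in>UNIV. h$k * cnj (h$j) * W$j$k)" by (rule sum.swap)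
  also have "\<dots> = herm_form W h" by (simp add: herm_form_def mult_ac)
  finally show ?thesis .
qed

lemma outer_op: "outer h = op h h"
  by (simp add: outer_def op_def)

lemma bil_op: "bil (op u v) x y = ip x u * ip v y"
  unfolding bil_def op_def ip_def
  by (simp add: sum_product mult_ac)

lemma trace_op: "trace (op u u) = of_real (nsq u)"
  by (simp add: trace_def op_def nsq_def cnjsq)

lemma op_mult: "op a b ** op c d = (\<chi> i j. ip b c * (a $ i * cnj (d $ j)))"
  unfolding matrix_matrix_mult_def op_def ip_def
  by (simp add: sum_distrib_left sum_distrib_right mult_ac)



lemma mm_sub_r: "(A - B) ** (C::complex^'n^'n) = A ** C - B ** C"
  by (simp add: vec_eq_iff matrix_matrix_mult_def sum_subtractf algebra_simps)
lemma mm_sub_l: "(C::complex^'n^'n) ** (A - B) = C ** A - C ** B"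
  by (simp add: vec_eq_iff matrix_matrix_mult_def sum_subtractf algebra_simps)
lemma mm_add_r: "(A + B) ** (C::complex^'n^'n) = A ** C + B ** C"
  by (simp add: vec_eq_iff matrix_matrix_mult_def sum.distrib algebra_simps)

lemma op_mult': "op a b ** op c d = op (ip b c *s a) d"
  by (subst op_mult) (simp add: op_def vec_eq_iff mult_ac)

lemma op_zero: "op 0 d = 0"
  by (simp add: op_def vec_eq_iff)

lemma psd_real: "psd W \<Longrightarrow> herm_form W x = of_real (Re (herm_form W x))"
  by (simp add: psd_def complex_eq_iff)

lemma psd_nonneg: "psd W \<Longrightarrow> Re (herm_form W x) \<ge> 0"
  by (simp add: psd_def)

lemma trace_QWQ:
  assumes "hermitian Q"
  shows "trace ((Q ** W) ** Q) = (\<Sum>k\<in>UNIV. herm_form W (\<chi> i. Q $ i $ k))"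
proof -
  have hc: "cnj (Q$i$j) = Q$j$i" for i j using assms unfolding hermitian_def by (metis complex_cnj_cnj)
  have "trace ((Q ** W) ** Q) = (\<Sum>k\<in>UNIV. \<Sum>j\<in>UNIV. \<Sum>i\<in>UNIV. Q$k$i * W$i$j * Q$j$k)"
    by (simp add: trace_def matrix_matrix_mult_def sum_distrib_right)
  also have "\<dots> = (\<Sum>k\<in>UNIV. \<Sum>i\<in>UNIV. \<Sum>j\<in>UNIV. Q$k$i * W$i$j * Q$j$k)"
    by (rule sum.cong[OF refl], rule sum.swap)
  also have "\<dots> = (\<Sum>k\<in>UNIV. herm_form W (\<chi> i. Q $ i $ k))"
    by (simp add: herm_form_def hc)
  finally show ?thesis .
qed

lemma proj_trace:
  assumes "hermitian P" "P ** P = P" "psd W"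
  shows "Re (trace (P ** W)) \<le> Re (trace W)"
proof -
  define Q where "Q = mat 1 - P"
  have hQ: "hermitian Q" unfolding hermitian_def
  proof (intro allI)
    fix i j
    have "P$i$j = cnj (P$j$i)" using assms(1) hermitian_def by blast
    thus "Q$i$j = cnj (Q$j$i)" by (simp add: Q_def mat_def)
  qed
  have QQ: "Q ** Q = Q" unfolding Q_def using assms(2)
    by (simp add: mm_sub_r mm_sub_l)
  have "trace (Q ** W) = trace ((Q ** Q) ** W)" by (simp add: QQ)
  also have "\<dots> = trace ((Q ** W) ** Q)"
    by (metis matrix_mul_assoc trace_mul_sym)
  also have "\<dots> = (\<Sum>k\<in>UNIV. herm_form W (\<chi> i. Q $ i $ k))" by (rule trace_QWQ[OF hQ])
  finally have "Re (trace (Q ** W)) = (\<Sum>k\<in>UNIV. Re (herm_form W (\<chi> i. Q $ i $ k)))" by simp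
  also have "\<dots> \<ge> 0" by (rule sum_nonneg) (use psd_nonneg[OF assms(3)] in auto)
  finally have "Re (trace (Q ** W)) \<ge> 0" .
  moreover have "trace (Q ** W) = trace W - trace (P ** W)"
    by (simp add: Q_def mm_sub_r trace_sub)
  ultimately show ?thesis by simp
qed

lemma herm_op: "hermitian (op u u)"
  by (simp add: hermitian_def op_def mult.commute)

lemma proj1:
  assumes "ip u u = 1" "psd W"
  shows "Re (herm_form W u) \<le> Re (trace W)"
proof -
  have "op u u ** op u u = op u u" by (simp add: op_mult' assms)
  from proj_trace[OF herm_op this assms(2)] show ?thesis by (simp add: trace_op_mult)
qed

lemma proj2:
  assumes "ip u u = 1" "ip v v = 1" "ip u v = 0" "psd W"
  shows "Re (herm_form W u) + Re (herm_form W v) \<le> Re (trace W)"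
proof -
  have vu: "ip v u = 0" using assms(3) ip_sym[of v u] by simp
  let ?P = "op u u + op v v"
  have h: "hermitian ?P" by (simp add: hermitian_def op_def mult.commute)
  have "?P ** ?P = ?P"
    by (simp add: matrix_add_ldistrib mm_add_r op_mult' assms vu op_zero)
  from proj_trace[OF h this assms(4)] show ?thesis
    by (simp add: mm_add_r trace_add trace_op_mult)
qed

lemma psd_op: "psd (op w w)"
proof -
  have "herm_form (op w w) x = of_real ((cmod (ip x w))^2)" for x
    by (simp add: herm_bil bil_op ip_sym[of w x] cnjsq)
  thus ?thesis unfolding psd_def by (simp add: herm_op)
qed

lemma CS:
  assumes "psd W"
  shows "(cmod (bil W x y))^2 \<le> Re (herm_form W x) * Re (herm_form W y)"
proof -
  define p where "p = Re (herm_form W x)"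
  define q where "q = Re (herm_form W y)"
  define r where "r = bil W x y"
  have hW: "hermitian W" using assms psd_def by auto
  have p0: "p \<ge> 0" "q \<ge> 0" using psd_nonneg[OF assms] p_def q_def by auto
  have key: "0 \<le> p + 2 * Re (l * r) + (cmod l)^2 * q" for l
  proof -
    have "herm_form W (x + l *s y) = herm_form W x + l * r + cnj l * cnj r + (l * cnj l) * herm_form W y"
      by (simp add: herm_bil bil_add1 bil_add2 bil_smult1 bil_smult2 bil_sym[OF hW, of y x] r_def algebra_simps)
    hence "Re (herm_form W (x + l *s y)) = p + 2 * Re (l * r) + (cmod l)^2 * q"
      by (simp add: p_def q_def cnjsq power2_eq_square)
    thus ?thesis using psd_nonneg[OF assms] by metis
  qed
  show ?thesis
  proof (cases "q = 0")
    case False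
    hence qp: "q > 0" using p0 by auto
    have "0 \<le> p + 2 * Re ((- cnj r / q) * r) + (cmod (- cnj r / q))^2 * q" by (rule key)
    also have "Re ((- cnj r / q) * r) = - ((cmod r)^2 / q)"
      by (simp add: cnjsq' complex_is_Real_iff)
    also have "(cmod (- cnj r / q))^2 * q = (cmod r)^2 / q" using qp
      by (simp add: norm_divide power2_eq_square)
    finally have "0 \<le> p - (cmod r)^2 / q" by simp
    hence "(cmod r)^2 / q \<le> p" by simp
    thus ?thesis using qp unfolding p_def q_def r_def by (simp add: pos_divide_le_eq mult.commute)
  next
    case True
    show ?thesis
    proof (rule ccontr)
      assume "\<not> ?thesis"
      hence rn: "r \<noteq> 0" using True by (auto simp: r_def q_def)
      let ?t = "(p + 1) / (2 * (cmod r)^2)"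
      have "0 \<le> p + 2 * Re ((- of_real ?t * cnj r) * r) + (cmod (- of_real ?t * cnj r))^2 * q" by (rule key)
      also have "Re ((- of_real ?t * cnj r) * r) = - ?t * (cmod r)^2"
        by (simp add: cnjsq' mult.assoc)
      finally have "0 \<le> p - (p + 1)" using True rn by simp
      thus False by simp
    qed
  qed
qed



lemma phase_lemma:
  fixes s :: complex and m c :: real
  assumes "m \<ge> 0" "\<bar>c\<bar> \<le> cmod s * sqrt m"
  shows "\<exists>y. y * cnj y = of_real m \<and> Re (s * y) = c"
proof (cases "s = 0")
  case True
  hence "c = 0" using assms by simp
  thus ?thesis using True assms
    by (intro exI[of _ "of_real (sqrt m)"]) (simp flip: of_real_mult)
next
  case False
  have c2: "c^2 \<le> (cmod s)^2 * m"
  proof -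
    have "c^2 = \<bar>c\<bar>^2" by simp
    also have "\<dots> \<le> (cmod s * sqrt m)^2" using assms(2) by (intro power_mono) auto
    also have "\<dots> = (cmod s)^2 * m" using assms(1) by (simp add: power_mult_distrib)
    finally show ?thesis .
  qed
  define d where "d = sqrt ((cmod s)^2 * m - c^2)"
  have d2: "d^2 = (cmod s)^2 * m - c^2" using c2 by (simp add: d_def)
  define k where "k = (cmod s)^2"
  have k0: "k > 0" using False by (simp add: k_def)
  have ss: "s * cnj s = of_real k" by (simp add: cnjsq k_def)
  define y where "y = cnj s / of_real k * Complex c d"
  have "s * y = (s * cnj s) / of_real k * Complex c d" by (simp add: y_def)
  also have "\<dots> = Complex c d" using k0 by (simp add: ss)
  finally have sy: "s * y = Complex c d" .
  have "y * cnj y = (s * cnj s) / (of_real k * of_real k) * (Complex c d * cnj (Complex c d))"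
    by (simp add: y_def)
  also have "Complex c d * cnj (Complex c d) = of_real (c^2 + d^2)"
    by (simp add: complex_eq_iff power2_eq_square)
  also have "c^2 + d^2 = k * m" using d2 by (simp add: k_def)
  also have "(s * cnj s) / (of_real k * of_real k) * of_real (k * m) = (of_real m :: complex)"
    using k0 by (simp add: ss)
  finally have "y * cnj y = of_real m" .
  moreover have "Re (s * y) = c" using sy by simp
  ultimately show ?thesis by blast
qed



lemma ofr_sq: "(of_real x :: complex) * cnj (of_real x) = of_real (x * x)"
  by simp

lemma herm_smult: "herm_form W (c *s x) = cnj c * c * herm_form W x"
  by (simp add: herm_bil bil_smult1 bil_smult2)

lemma rank1_red:
  fixes W :: "complex^'n^'n"
  assumes W: "psd W" and h0: "h \<noteq> 0"
  shows "\<exists>v. ip h v * cnj (ip h v) = herm_form W h \<and> ip g v * cnj (ip g v) = herm_form W g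
             \<and> nsq v \<le> Re (trace W)"
proof -
  have hW: "hermitian W" using W psd_def by auto
  have hpos: "nsq h > 0" using h0 nsq_zero nsq_nonneg less_eq_real_def by metis
  define nh where "nh = sqrt (nsq h)"
  have nh0: "nh > 0" using hpos nh_def by simp
  have nh2: "nh * nh = nsq h" using hpos nh_def by simp
  define u1 where "u1 = of_real (1/nh) *s h"
  have "ip u1 u1 = of_real (1/nh) * (of_real (1/nh) * ip h h)"
    unfolding u1_def ip_smult1 ip_smult2 by simp
  also have "\<dots> = 1" using nh0 by (simp add: ip_self nh2[symmetric] field_simps)
  finally have u1u1: "ip u1 u1 = 1" .
  have hu: "h = of_real nh *s u1" using nh0
    by (simp add: u1_def vector_smult_assoc flip: of_real_mult)
  define m11 where "m11 = Re (herm_form W u1)"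
  have m11: "herm_form W u1 = of_real m11" "m11 \<ge> 0"
    using psd_real[OF W] psd_nonneg[OF W] m11_def by auto
  have "herm_form W h = herm_form W (of_real nh *s u1)" using hu by metis
  also have "\<dots> = of_real (nh * nh * m11)" by (simp add: herm_smult m11)
  finally have hh: "herm_form W h = of_real (nh * nh * m11)" .
  have "ip h u1 = ip (of_real nh *s u1) u1" using hu by metis
  also have "\<dots> = of_real nh" by (simp add: ip_smult1 u1u1)
  finally have ihu: "ip h u1 = of_real nh" .
  define a where "a = ip u1 g"
  define g' where "g' = g - a *s u1"
  define x where "x = sqrt m11"
  have xx: "x * x = m11" using m11(2) by (simp add: x_def)
  show ?thesis
  proof (cases "g' = 0")
    case True
    hence ga: "g = a *s u1" using g'_def by simp
    define v where "v = of_real x *s u1"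
    have "ip h v = of_real (nh * x)" by (simp add: v_def ip_smult2 ihu)
    hence "ip h v * cnj (ip h v) = of_real (nh * x * (nh * x))" by (simp only: ofr_sq)
    also have "nh * x * (nh * x) = nh * nh * (x * x)" by (simp add: mult_ac)
    finally have 1: "ip h v * cnj (ip h v) = herm_form W h" by (simp add: hh xx)
    have "ip g v = cnj a * of_real x" by (simp add: v_def ga ip_smult2 ip_smult1 u1u1)
    hence "ip g v * cnj (ip g v) = cnj a * a * (of_real x * cnj (of_real x))" by (simp add: mult_ac)
    also have "\<dots> = herm_form W g" by (simp only: ofr_sq xx ga herm_smult m11)
    finally have 2: "ip g v * cnj (ip g v) = herm_form W g" .
    have "ip v v = of_real x * cnj (of_real x)" by (simp add: v_def ip_smult1 ip_smult2 u1u1 mult.commute)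
    also have "\<dots> = of_real m11" by (simp only: ofr_sq xx)
    finally have "nsq v = m11" by (simp add: ip_self)
    hence 3: "nsq v \<le> Re (trace W)" using proj1[OF u1u1 W] m11 by simp
    show ?thesis using 1 2 3 by blast
  next
    case False
    have gpos: "nsq g' > 0" using False nsq_zero nsq_nonneg less_eq_real_def by metis
    define b where "b = sqrt (nsq g')"
    have b0: "b > 0" using gpos b_def by simp
    have b2: "b * b = nsq g'" using gpos b_def by simp
    define u2 where "u2 = of_real (1/b) *s g'"
    have "ip u2 u2 = of_real (1/b) * (of_real (1/b) * ip g' g')"
      unfolding u2_def ip_smult1 ip_smult2 by simp
    also have "\<dots> = 1" using b0 by (simp add: ip_self b2[symmetric] field_simps)
    finally have u2u2: "ip u2 u2 = 1" .
    have "ip u1 u2 = of_real (1/b) * (ip u1 g - a * ip u1 u1)"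
      unfolding u2_def g'_def ip_smult2 ip_diff2 by simp
    hence u1u2: "ip u1 u2 = 0" by (simp add: u1u1 a_def)
    have u2u1: "ip u2 u1 = 0" using u1u2 ip_sym[of u2 u1] by simp
    have "of_real b *s u2 = g'" using b0
      by (simp add: u2_def vector_smult_assoc flip: of_real_mult)
    hence gu: "g = a *s u1 + of_real b *s u2" by (simp add: g'_def)
    define m22 where "m22 = Re (herm_form W u2)"
    have m22: "herm_form W u2 = of_real m22" "m22 \<ge> 0"
      using psd_real[OF W] psd_nonneg[OF W] m22_def by auto
    define m12 where "m12 = bil W u1 u2"
    have cs: "(cmod m12)^2 \<le> m11 * m22" using CS[OF W, of u1 u2] m11_def m22_def m12_def by simp
    have m21: "bil W u2 u1 = cnj m12" unfolding m12_def by (rule bil_sym[OF hW])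
    have "herm_form W g = bil W (a *s u1 + of_real b *s u2) (a *s u1 + of_real b *s u2)"
      using gu herm_bil by metis
    also have "\<dots> = cnj a * a * bil W u1 u1 + of_real b * of_real b * bil W u2 u2
                 + of_real b * (cnj a * bil W u1 u2 + a * bil W u2 u1)"
      by (simp add: bil_add1 bil_add2 bil_smult1 bil_smult2 algebra_simps)
    finally have hg: "herm_form W g = cnj a * a * of_real m11 + of_real b * of_real b * of_real m22
                 + of_real b * (cnj a * m12 + a * cnj m12)"
      by (simp add: m21 flip: m12_def herm_bil add: m11 m22)
    define s where "s = a * of_real x"
    define c where "c = Re (cnj a * m12)"
    have "\<bar>c\<bar> \<le> cmod s * sqrt m22"
    proof -
      have "\<bar>c\<bar> \<le> cmod (cnj a * m12)" unfolding c_def by (rule abs_Re_le_cmod)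
      also have "\<dots> = cmod a * cmod m12" by (simp add: norm_mult)
      also have "cmod m12 \<le> sqrt (m11 * m22)" using cs real_le_rsqrt by blast
      hence "cmod a * cmod m12 \<le> cmod a * (sqrt m11 * sqrt m22)"
        by (simp add: mult_left_mono real_sqrt_mult)
      also have "\<dots> = cmod s * sqrt m22" using m11(2) by (simp add: s_def x_def norm_mult)
      finally show ?thesis .
    qed
    then obtain y where y: "y * cnj y = of_real m22" "Re (s * y) = c"
      using phase_lemma[OF m22(2)] by blast
    define v where "v = of_real x *s u1 + y *s u2"
    have "ip h v = of_real (nh * x)"
      by (simp add: v_def ip_add2 ip_smult2 ihu)
        (metis hu ip_smult1 u1u2 mult_zero_right)
    hence "ip h v * cnj (ip h v) = of_real (nh * x * (nh * x))" by (simp only: ofr_sq)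
    also have "nh * x * (nh * x) = nh * nh * (x * x)" by (simp add: mult_ac)
    finally have 1: "ip h v * cnj (ip h v) = herm_form W h" by (simp add: hh xx)
    have igv: "ip g v = cnj a * of_real x + of_real b * y"
      by (simp add: v_def gu ip_add1 ip_add2 ip_smult1 ip_smult2 u1u1 u1u2 u2u1 u2u2)
    have zz0: "cnj a * m12 + a * cnj m12 = of_real (2 * c)"
      using complex_add_cnj[of "cnj a * m12"] c_def by simp
    have zz: "s * y + cnj (s * y) = cnj a * m12 + a * cnj m12"
      by (simp only: complex_add_cnj y(2) zz0)
    have xx': "of_real x * of_real x = (of_real m11 :: complex)"
      by (simp add: xx flip: of_real_mult)
    have "ip g v * cnj (ip g v) = cnj a * a * (of_real x * of_real x) + of_real b * of_real b * (y * cnj y)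
            + of_real b * (s * y + cnj (s * y))"
      by (simp add: igv s_def algebra_simps)
    also have "\<dots> = cnj a * a * of_real m11 + of_real b * of_real b * of_real m22
                 + of_real b * (cnj a * m12 + a * cnj m12)"
      by (simp only: xx' y(1) zz)
    also have "\<dots> = herm_form W g" by (rule hg[symmetric])
    finally have 2: "ip g v * cnj (ip g v) = herm_form W g" .
    have "ip v v = of_real x * of_real x + y * cnj y"
      by (simp add: v_def ip_add1 ip_add2 ip_smult1 ip_smult2 u1u1 u1u2 u2u1 u2u2 mult.commute)
    also have "\<dots> = of_real (m11 + m22)" by (simp add: xx' y(1))
    finally have "nsq v = m11 + m22" by (metis ip_self of_real_eq_iff)
    hence 3: "nsq v \<le> Re (trace W)" using proj2[OF u1u1 u2u2 u1u2 W] m11_def m22_def by simp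
    show ?thesis using 1 2 3 by blast
  qed
qed



lemma rank_op:
  fixes w :: "complex^'n"
  assumes "w \<noteq> 0"
  shows "rank (op w w) = 1"
proof -
  define c where "c = (\<chi> j. cnj (w $ j))"
  obtain k where k: "w $ k \<noteq> 0" using assms by (auto simp: vec_eq_iff)
  have c0: "c \<noteq> 0" using k by (auto simp: c_def vec_eq_iff)
  have rw: "row i (op w w) = w $ i *s c" for i
    by (simp add: row_def op_def c_def vec_eq_iff)
  have "vec.span (rows (op w w)) = vec.span {c}"
  proof (subst vec.span_eq, intro conjI)
    show "rows (op w w) \<subseteq> vec.span {c}"
    proof
      fix r assume "r \<in> rows (op w w)"
      then obtain i where "r = w $ i *s c" by (auto simp: rows_def rw)
      then show "r \<in> vec.span {c}" by (metis vec.span_scale vec.span_base singletonI)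
    qed
    have "c = (1 / w $ k) *s row k (op w w)" using k by (simp add: rw vector_smult_assoc)
    moreover have "row k (op w w) \<in> vec.span (rows (op w w))"
      by (rule vec.span_base) (auto simp: rows_def)
    ultimately show "{c} \<subseteq> vec.span (rows (op w w))"
      by (metis empty_subsetI insert_subset vec.span_scale)
  qed
  hence "vec.dim (rows (op w w)) = vec.dim {c}" by (metis vec.dim_span)
  thus ?thesis using c0 by (simp add: row_rank_def_gen)
qed

definition qq :: "complex^'n \<Rightarrow> complex^'n \<Rightarrow> real" where
  "qq h w = (cmod (ip h w))^2"

lemma herm_op_q: "herm_form (op w w) h = of_real (qq h w)"
  by (simp add: herm_bil bil_op ip_sym[of w h] cnjsq qq_def)

lemma feas_op:
  "feasible hs hb N Gs Gb (outer w) (outer v) \<longleftrightarrow>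
     N * Gs \<le> qq hs w \<and> Gb * qq hs w + N * Gb \<le> qq hs v \<and> Gb * qq hb w + N * Gb \<le> qq hb v"
  by (simp add: feasible_def outer_op psd_op herm_op trace_op_mult herm_op_q)

lemma obj_op: "objective (outer w) (outer v) = nsq w + nsq v"
  by (simp add: objective_def outer_op trace_op)

lemma cont_qq: "continuous_on UNIV (\<lambda>p. qq h (f p))" if "continuous_on UNIV f"
  for f :: "'a::topological_space \<Rightarrow> complex^'n"
  unfolding qq_def ip_def by (intro continuous_intros that)

lemma cont_nsq: "continuous_on UNIV (\<lambda>p. nsq (f p))" if "continuous_on UNIV f"
  for f :: "'a::topological_space \<Rightarrow> complex^'n"
  unfolding nsq_def by (intro continuous_intros that)

lemma reduce:
  assumes "feasible hs hb N Gs Gb Ws Wb" "hs \<noteq> 0"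
  shows "\<exists>w v. feasible hs hb N Gs Gb (outer w) (outer v) \<and> nsq w + nsq v \<le> objective Ws Wb"
proof -
  have Ws: "psd Ws" and Wb: "psd Wb" using assms(1) unfolding feasible_def by blast+
  obtain w where w: "ip hs w * cnj (ip hs w) = herm_form Ws hs" "ip hb w * cnj (ip hb w) = herm_form Ws hb"
     "nsq w \<le> Re (trace Ws)" using rank1_red[OF Ws assms(2)] by blast
  obtain v where v: "ip hs v * cnj (ip hs v) = herm_form Wb hs" "ip hb v * cnj (ip hb v) = herm_form Wb hb"
     "nsq v \<le> Re (trace Wb)" using rank1_red[OF Wb assms(2)] by blast
  have q: "qq hs w = Re (trace (outer hs ** Ws))" "qq hb w = Re (trace (outer hb ** Ws))"
          "qq hs v = Re (trace (outer hs ** Wb))" "qq hb v = Re (trace (outer hb ** Wb))"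
    using w v by (simp_all add: qq_def outer_op trace_op_mult cnjsq flip: of_real_power)
           (metis Re_complex_of_real)+
  have "feasible hs hb N Gs Gb (outer w) (outer v)" using assms(1) q unfolding feas_op by (simp add: feasible_def)
  moreover have "nsq w + nsq v \<le> objective Ws Wb" using w(3) v(3) by (simp add: objective_def)
  ultimately show ?thesis by blast
qed



lemma herm_mat: "herm_form (mat (of_real t)) x = of_real (t * nsq x)"
proof -
  have e: "(\<Sum>j\<in>UNIV. cnj (x$i) * mat (of_real t) $ i $ j * x$j) = of_real t * (cnj (x$i) * x$i)" for i
  proof -
    have "(\<Sum>j\<in>UNIV. cnj (x$i) * mat (of_real t) $ i $ j * x$j)
        = (\<Sum>j\<in>UNIV. if i = j then cnj (x$i) * of_real t * x$j else 0)"
      by (rule sum.cong) (auto simp: mat_def)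
    also have "\<dots> = cnj (x$i) * of_real t * x$i" by (simp add: sum.delta)
    finally show ?thesis by (simp add: mult_ac)
  qed
  show ?thesis
    by (simp add: herm_form_def e nsq_def cnjsq' sum_distrib_left)
qed

lemma psd_mat: "t \<ge> 0 \<Longrightarrow> psd (mat (of_real t) :: complex^'n^'n)"
  unfolding psd_def
  by (simp add: herm_mat nsq_nonneg) (simp add: hermitian_def mat_def)

theorem proposition1:
  fixes hs hb :: "complex^'n" and Nno Gs0 Gb0 :: real
  assumes "hs \<noteq> 0" and "hb \<noteq> 0"
    and "Nno > 0" and "Gs0 > 0" and "Gb0 > 0"
  shows "\<exists>Ws Wb. feasible hs hb Nno Gs0 Gb0 Ws Wb
           \<and> (\<forall>Ws' Wb'. feasible hs hb Nno Gs0 Gb0 Ws' Wb' \<longrightarrow> objective Ws Wb \<le> objective Ws' Wb')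
           \<and> rank Ws = 1 \<and> rank Wb = 1"
proof -
  have ps: "nsq hs > 0" using assms(1) nsq_zero nsq_nonneg less_eq_real_def by metis
  have pb: "nsq hb > 0" using assms(2) nsq_zero nsq_nonneg less_eq_real_def by metis
  define \<sigma> where "\<sigma> = sqrt (Nno * Gs0) / nsq hs"
  define w0 where "w0 = of_real \<sigma> *s hs"
  have qw0: "qq hs w0 = Nno * Gs0"
  proof -
    have "ip hs w0 = of_real (\<sigma> * nsq hs)" by (simp add: w0_def ip_smult2 ip_self)
    hence "qq hs w0 = (cmod (of_real (\<sigma> * nsq hs)))^2" by (simp only: qq_def)
    also have "\<dots> = (\<sigma> * nsq hs)^2" by (simp only: norm_of_real power2_abs)
    also have "\<dots> = Nno * Gs0" using ps assms by (simp add: \<sigma>_def)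
    finally show ?thesis .
  qed
  define t where "t = (Gb0 * (Nno * Gs0) + Nno * Gb0) / nsq hs + (Gb0 * qq hb w0 + Nno * Gb0) / nsq hb"
  have qnn: "qq hb w0 \<ge> 0" by (simp add: qq_def)
  have A1: "(Gb0 * (Nno * Gs0) + Nno * Gb0) / nsq hs \<ge> 0" "(Gb0 * qq hb w0 + Nno * Gb0) / nsq hb \<ge> 0"
    using assms ps pb qnn by auto
  have t0: "t \<ge> 0" using A1 t_def by simp
  have t1: "t * nsq hs \<ge> Gb0 * (Nno * Gs0) + Nno * Gb0"
  proof -
    have "t * nsq hs \<ge> (Gb0 * (Nno * Gs0) + Nno * Gb0) / nsq hs * nsq hs"
      using A1 ps t_def by (intro mult_right_mono) auto
    thus ?thesis using ps by simp
  qed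
  have t2: "t * nsq hb \<ge> Gb0 * qq hb w0 + Nno * Gb0"
  proof -
    have "t * nsq hb \<ge> (Gb0 * qq hb w0 + Nno * Gb0) / nsq hb * nsq hb"
      using A1 pb t_def by (intro mult_right_mono) auto
    thus ?thesis using pb by simp
  qed
  have tq: "Re (trace (outer h ** mat (of_real t))) = t * nsq h" for h :: "complex^'n"
    by (simp add: outer_op trace_op_mult herm_mat)
  have tqw: "Re (trace (outer h ** outer w0)) = qq h w0" for h :: "complex^'n"
    by (simp add: outer_op trace_op_mult herm_op_q)
  have hm: "hermitian (mat (of_real t) :: complex^'n^'n)" using psd_mat[OF t0] psd_def by blast
  have F0: "feasible hs hb Nno Gs0 Gb0 (outer w0) (mat (of_real t))"
    unfolding feasible_def tq tqw using t1 t2 qw0 hm psd_mat[OF t0]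
    by (simp add: outer_op psd_op herm_op)
  obtain w1 v1 where wv1: "feasible hs hb Nno Gs0 Gb0 (outer w1) (outer v1)"
    using reduce[OF F0 assms(1)] by blast
  define C where "C = nsq w1 + nsq v1"
  define S where "S = {p :: (complex^'n) \<times> (complex^'n).
     Nno * Gs0 \<le> qq hs (fst p) \<and> Gb0 * qq hs (fst p) + Nno * Gb0 \<le> qq hs (snd p)
     \<and> Gb0 * qq hb (fst p) + Nno * Gb0 \<le> qq hb (snd p) \<and> nsq (fst p) + nsq (snd p) \<le> C}"
  have cl: "closed S" unfolding S_def
    by (intro closed_Collect_conj closed_Collect_le continuous_intros cont_qq cont_nsq
          continuous_on_fst continuous_on_snd continuous_on_id)
  have bd: "bounded S" unfolding bounded_iff
  proof (intro exI ballI)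
    fix p assume "p \<in> S"
    hence "nsq (fst p) + nsq (snd p) \<le> C" by (simp add: S_def)
    moreover obtain a b where ab: "p = (a, b)" by (cases p)
    moreover have "0 \<le> nsq a + nsq b" using nsq_nonneg[of a] nsq_nonneg[of b] by simp
    ultimately have "(norm p)^2 \<le> C"
      by (simp add: norm_Pair norm_nsq)
    thus "norm p \<le> sqrt C" using real_le_rsqrt by blast
  qed
  have cp: "compact S" using cl bd compact_eq_bounded_closed by blast
  have ne: "(w1, v1) \<in> S" using wv1 by (simp add: S_def feas_op C_def)
  have "continuous_on S (\<lambda>p. nsq (fst p) + nsq (snd p))"
    by (intro continuous_intros continuous_on_subset[OF cont_nsq] continuous_on_fst continuous_on_snd
       continuous_on_id) auto
  then obtain p where pS: "p \<in> S" and pmin: "\<And>y. y \<in> S \<Longrightarrow> nsq (fst p) + nsq (snd p) \<le> nsq (fst y) + nsq (snd y)"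
    using continuous_attains_inf[OF cp] ne by blast
  obtain w v where p: "p = (w, v)" by (cases p)
  have Fp: "feasible hs hb Nno Gs0 Gb0 (outer w) (outer v)" and pC: "nsq w + nsq v \<le> C"
    using pS by (auto simp: S_def feas_op p)
  have opt: "objective (outer w) (outer v) \<le> objective Ws' Wb'"
    if F: "feasible hs hb Nno Gs0 Gb0 Ws' Wb'" for Ws' Wb'
  proof -
    obtain w' v' where F': "feasible hs hb Nno Gs0 Gb0 (outer w') (outer v')"
      and le: "nsq w' + nsq v' \<le> objective Ws' Wb'" using reduce[OF F assms(1)] by blast
    show ?thesis
    proof (cases "nsq w' + nsq v' \<le> C")
      case True
      hence "(w', v') \<in> S" using F' by (simp add: S_def feas_op)
      from pmin[OF this] le show ?thesis by (simp add: obj_op p)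
    next
      case False
      thus ?thesis using pC le by (simp add: obj_op)
    qed
  qed
  have w0': "w \<noteq> 0"
  proof
    assume "w = 0"
    hence "qq hs w = 0" by (simp add: qq_def ip_def)
    moreover have np: "0 < Nno * Gs0" using assms(3,4) by simp
    ultimately show False using Fp by (simp add: feas_op)
  qed
  have v0': "v \<noteq> 0"
  proof
    assume "v = 0"
    hence "qq hs v = 0" by (simp add: qq_def ip_def)
    moreover have "qq hs w \<ge> 0" by (simp add: qq_def)
    ultimately show False using Fp assms
      by (simp add: feas_op) (smt (verit) mult_nonneg_nonneg mult_pos_pos)
  qed
  show ?thesis
    using Fp opt rank_op[OF w0'] rank_op[OF v0']
    by (intro exI[of _ "outer w"] exI[of _ "outer v"]) (simp add: outer_op)
qed


end
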